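(* Let $G \leq \mathrm{Aut}(K_{n,n})$ be a subgroup isomorphic to $S_4$, and let $H \leq G$ be its subgroup isomorphic to $A_4$. Suppose there is an embedding $\Gamma$ of $K_{n,n}$ in $S^3$ such that $G$ is induced on $\Gamma$ by an isomorphic subgroup $\widehat{G} \leq \mathrm{SO}(4)$. Assume each involution of $H$ fixes exactly two vertices of $V$ and exactly two vertices of $W$. Then every element of $G$ maps $V$ to $V$ and $W$ to $W$.
   Context: $K_{n,n}$ is the complete bipartite graph with vertex sets $V$, $W$ of $n$ vertices each; every vertex of $V$ is adjacent to every vertex of $W$, and there are no other edges. $S^3$ is the unit sphere in $\mathbb{R}^4$, on which $\mathrm{SO}(4)$ acts by isometries. "$G$ is induced on $\Gamma$ by an isomorphic subgroup $\widehat{G} \leq \mathrm{SO}(4)$" means every element of $\widehat{G}$ leaves $\Gamma$ setwise invariant, and restricting to $\Gamma$ gives an isomorphism from $\widehat{G}$ onto $G$. An involution is an element of order 2. *)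

theory Defs
  imports "HOL-Analysis.Analysis" "HOL-Algebra.Sym_Groups"
begin

type_synonym vtx = "nat + nat"

definition partV :: "nat \<Rightarrow> vtx set" where "partV n = Inl ` {..<n}"
definition partW :: "nat \<Rightarrow> vtx set" where "partW n = Inr ` {..<n}"
definition Knn_verts :: "nat \<Rightarrow> vtx set" where "Knn_verts n = partV n \<union> partW n"
definition Knn_adj :: "nat \<Rightarrow> vtx \<Rightarrow> vtx \<Rightarrow> bool" where
  "Knn_adj n x y \<longleftrightarrow> (x \<in> partV n \<and> y \<in> partW n) \<or> (x \<in> partW n \<and> y \<in> partV n)"

definition Aut_Knn :: "nat \<Rightarrow> (vtx \<Rightarrow> vtx) set" where
  "Aut_Knn n = {f. f permutes Knn_verts n \<and>
     (\<forall>x\<in>Knn_verts n. \<forall>y\<in>Knn_verts n. Knn_adj n x y \<longleftrightarrow> Knn_adj n (f x) (f y))}"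

definition perm_group :: "(vtx \<Rightarrow> vtx) set \<Rightarrow> (vtx \<Rightarrow> vtx) monoid" where
  "perm_group S = \<lparr>carrier = S, mult = (\<circ>), one = id\<rparr>"

definition matrix_group :: "(real^4^4) set \<Rightarrow> (real^4^4) monoid" where
  "matrix_group S = \<lparr>carrier = S, mult = (**), one = mat 1\<rparr>"

definition SO4 :: "(real^4^4) set" where
  "SO4 = {A. orthogonal_matrix A \<and> det A = 1}"

definition S3 :: "(real^4) set" where "S3 = sphere 0 1"

definition Knn_embedding :: "nat \<Rightarrow> (vtx \<Rightarrow> real^4) \<Rightarrow> (vtx \<Rightarrow> vtx \<Rightarrow> real \<Rightarrow> real^4) \<Rightarrow> bool" where
  "Knn_embedding n emb gam \<longleftrightarrow>
     inj_on emb (Knn_verts n) \<and> emb ` Knn_verts n \<subseteq> S3 \<and>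
     (\<forall>v\<in>partV n. \<forall>w\<in>partW n.
        arc (gam v w) \<and> pathstart (gam v w) = emb v \<and> pathfinish (gam v w) = emb w \<and>
        path_image (gam v w) \<subseteq> S3 \<and>
        path_image (gam v w) \<inter> emb ` Knn_verts n = {emb v, emb w}) \<and>
     (\<forall>v\<in>partV n. \<forall>w\<in>partW n. \<forall>v'\<in>partV n. \<forall>w'\<in>partW n. (v, w) \<noteq> (v', w') \<longrightarrow>
        path_image (gam v w) \<inter> path_image (gam v' w') \<subseteq> emb ` ({v, w} \<inter> {v', w'}))"

definition edge_image :: "nat \<Rightarrow> (vtx \<Rightarrow> vtx \<Rightarrow> real \<Rightarrow> real^4) \<Rightarrow> vtx \<Rightarrow> vtx \<Rightarrow> (real^4) set" where
  "edge_image n gam x y = (if x \<in> partV n then path_image (gam x y) else path_image (gam y x))"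

definition embedded_graph :: "nat \<Rightarrow> (vtx \<Rightarrow> real^4) \<Rightarrow> (vtx \<Rightarrow> vtx \<Rightarrow> real \<Rightarrow> real^4) \<Rightarrow> (real^4) set" where
  "embedded_graph n emb gam = emb ` Knn_verts n \<union> (\<Union>v\<in>partV n. \<Union>w\<in>partW n. path_image (gam v w))"

definition induced_by :: "nat \<Rightarrow> (vtx \<Rightarrow> real^4) \<Rightarrow> (vtx \<Rightarrow> vtx \<Rightarrow> real \<Rightarrow> real^4) \<Rightarrow>
    (vtx \<Rightarrow> vtx) set \<Rightarrow> (real^4^4) set \<Rightarrow> bool" where
  "induced_by n emb gam G Ghat \<longleftrightarrow> Ghat \<subseteq> SO4 \<and>
     (\<forall>A\<in>Ghat. (\<lambda>x. A *v x) ` embedded_graph n emb gam = embedded_graph n emb gam) \<and>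
     (\<exists>phi. phi \<in> iso (matrix_group Ghat) (perm_group G) \<and>
        (\<forall>A\<in>Ghat. (\<forall>v\<in>Knn_verts n. A *v emb v = emb (phi A v)) \<and>
           (\<forall>v\<in>partV n. \<forall>w\<in>partW n.
              (\<lambda>x. A *v x) ` path_image (gam v w) = edge_image n gam (phi A v) (phi A w))))"

end

theory Submission
  imports Defs
begin

lemma orth_inner:
  fixes A :: "real^4^4"
  assumes "orthogonal_matrix A"
  shows "(A *v v) \<bullet> (A *v w) = v \<bullet> w"
proof -
  have "orthogonal_transformation (\<lambda>x. A *v x)"
    using assms by (simp add: orthogonal_transformation_matrix)
  then show ?thesis by (simp add: orthogonal_transformation_def)
qed

lemma QAQ_entry:
  fixes A :: "real^4^4" and e :: "4 \<Rightarrow> real^4"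
  shows "(transpose (\<chi> i j. e j $ i) ** A ** (\<chi> i j. e j $ i)) $ i $ j = e i \<bullet> (A *v e j)"
  by (simp add: matrix_matrix_mult_def matrix_vector_mult_def transpose_def inner_vec_def
      sum_distrib_left sum_distrib_right algebra_simps sum_4)

lemma QQ_entry:
  fixes e :: "4 \<Rightarrow> real^4"
  shows "(transpose (\<chi> i j. e j $ i) ** (\<chi> i j. e j $ i)) $ i $ j = e i \<bullet> e j"
  by (simp add: matrix_matrix_mult_def transpose_def inner_vec_def sum_4)

lemma det_4_block:
  fixes A :: "real^4^4"
  assumes "A$1$1 = 1" "A$2$2 = -1" "A$1$2 = 0" "A$1$3 = 0" "A$1$4 = 0"
   "A$2$1 = 0" "A$2$3 = 0" "A$2$4 = 0" "A$3$1 = 0" "A$3$2 = 0" "A$4$1 = 0" "A$4$2 = 0"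
  shows "det A = - (A$3$3 * A$4$4 - A$3$4 * A$4$3)"
proof -
  have f1: "finite {2::4, 3, 4}" "1 \<notin> {2::4, 3, 4}" by auto
  have f2: "finite {3::4, 4}" "2 \<notin> {3::4, 4}" by auto
  have f3: "finite {4::4}" "3 \<notin> {4::4}" by auto
  show ?thesis
    unfolding det_def UNIV_4
    unfolding sum_over_permutations_insert[OF f1]
    unfolding sum_over_permutations_insert[OF f2]
    unfolding sum_over_permutations_insert[OF f3]
    unfolding permutes_sing
    by (simp add: assms sign_swap_id permutation_swap_id sign_compose sign_id swap_id_eq)
qed

lemma so4_sq:
  fixes A :: "real^4^4"
  assumes oA: "orthogonal_matrix A" and dA: "det A = 1" and Ax: "A *v x = x"
    and Au: "A *v u = - u" and x0: "x \<noteq> 0" and u0: "u \<noteq> 0"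
  shows "A ** A = mat 1"
proof -
  define e1 where "e1 = x /\<^sub>R norm x"
  define e2 where "e2 = u /\<^sub>R norm u"
  have Ae1: "A *v e1 = e1" using Ax by (simp add: e1_def matrix_vector_mult_scaleR)
  have Ae2: "A *v e2 = - e2" using Au by (simp add: e2_def matrix_vector_mult_scaleR)
  have n1: "e1 \<bullet> e1 = 1" using x0 by (simp add: e1_def dot_square_norm)
  have n2: "e2 \<bullet> e2 = 1" using u0 by (simp add: e2_def dot_square_norm)
  have e12: "e1 \<bullet> e2 = 0"
    using orth_inner[OF oA, of e1 e2] Ae1 Ae2 by simp
  have "dim {e1, e2} \<le> card {e1, e2}" by (rule dim_le_card) (auto intro: span_base)
  also have "\<dots> \<le> 2" by (simp add: card_insert_if)
  finally have "dim {e1, e2} < DIM(real^4)" by simp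
  then obtain e3' where e3': "e3' \<noteq> 0" "\<And>y. y \<in> span {e1, e2} \<Longrightarrow> orthogonal e3' y"
    using orthogonal_to_subspace_exists by blast
  define e3 where "e3 = e3' /\<^sub>R norm e3'"
  have n3: "e3 \<bullet> e3 = 1" using e3' by (simp add: e3_def dot_square_norm)
  have e13: "e1 \<bullet> e3 = 0" using e3'(2)[of e1]
    by (simp add: e3_def span_base orthogonal_def inner_commute)
  have e23: "e2 \<bullet> e3 = 0" using e3'(2)[of e2]
    by (simp add: e3_def span_base orthogonal_def inner_commute)
  have "dim {e1, e2, e3} \<le> card {e1, e2, e3}" by (rule dim_le_card) (auto intro: span_base)
  also have "\<dots> \<le> 3" by (simp add: card_insert_if)
  finally have "dim {e1, e2, e3} < DIM(real^4)" by simp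
  then obtain e4' where e4': "e4' \<noteq> 0" "\<And>y. y \<in> span {e1, e2, e3} \<Longrightarrow> orthogonal e4' y"
    using orthogonal_to_subspace_exists by blast
  define e4 where "e4 = e4' /\<^sub>R norm e4'"
  have n4: "e4 \<bullet> e4 = 1" using e4' by (simp add: e4_def dot_square_norm)
  have e14: "e1 \<bullet> e4 = 0" using e4'(2)[of e1]
    by (simp add: e4_def span_base orthogonal_def inner_commute)
  have e24: "e2 \<bullet> e4 = 0" using e4'(2)[of e2]
    by (simp add: e4_def span_base orthogonal_def inner_commute)
  have e34: "e3 \<bullet> e4 = 0" using e4'(2)[of e3]
    by (simp add: e4_def span_base orthogonal_def inner_commute)
  define e :: "4 \<Rightarrow> real^4" where
    "e = (\<lambda>i. if i = 1 then e1 else if i = 2 then e2 else if i = 3 then e3 else e4)"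
  have e_simps: "e 1 = e1" "e 2 = e2" "e 3 = e3" "e 4 = e4" by (simp_all add: e_def)
  have orthn: "e i \<bullet> e j = (if i = j then 1 else 0)" for i j
    using n1 n2 n3 n4 e12 e13 e14 e23 e24 e34
    using exhaust_4[of i] exhaust_4[of j] by (auto simp: e_simps inner_commute)
  define Q :: "real^4^4" where "Q = (\<chi> i j. e j $ i)"
  have QQ: "transpose Q ** Q = mat 1"
    unfolding Q_def by (simp add: vec_eq_iff QQ_entry orthn mat_def)
  have QQ': "Q ** transpose Q = mat 1" using QQ matrix_left_right_inverse by blast
  have oQ: "orthogonal_matrix Q" using QQ by (simp add: orthogonal_matrix)
  define M where "M = transpose Q ** A ** Q"
  have Ment: "M $ i $ j = e i \<bullet> (A *v e j)" for i j
    unfolding M_def Q_def by (rule QAQ_entry)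
  have col1: "A *v e 1 = e 1" and col2: "A *v e 2 = - e 2" using Ae1 Ae2 by (simp_all add: e_simps)
  have row1: "e 1 \<bullet> (A *v e j) = e 1 \<bullet> e j" for j
    using orth_inner[OF oA, of "e 1" "e j"] col1 by simp
  have row2: "e 2 \<bullet> (A *v e j) = - (e 2 \<bullet> e j)" for j
    using orth_inner[OF oA, of "e 2" "e j"] col2 by simp
  have detM: "det M = 1"
  proof -
    have "det M = det (transpose Q) * det A * det Q" by (simp add: M_def det_mul)
    also have "\<dots> = det (transpose Q ** Q)" using dA by (simp add: det_mul det_transpose)
    also have "\<dots> = 1" using QQ by simp
    finally show ?thesis .
  qed
  have oM: "orthogonal_matrix M"
    unfolding M_def by (intro orthogonal_matrix_mul oA oQ) (simp add: orthogonal_matrix_transpose oQ)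
  have MM: "transpose M ** M = mat 1" using oM by (simp add: orthogonal_matrix)
  have z: "M$1$1 = 1" "M$2$2 = -1" "M$1$2 = 0" "M$1$3 = 0" "M$1$4 = 0"
   "M$2$1 = 0" "M$2$3 = 0" "M$2$4 = 0" "M$3$1 = 0" "M$3$2 = 0" "M$4$1 = 0" "M$4$2 = 0"
    by (simp_all only: Ment row1 row2 col1 col2 orthn inner_minus_right) simp_all
  define p where "p = M$3$3"
  define q where "q = M$3$4"
  define r where "r = M$4$3"
  define s where "s = M$4$4"
  have d: "- (p * s - q * r) = 1" using det_4_block[OF z] detM by (simp add: p_def q_def r_def s_def)
  have "(transpose M ** M) $ 3 $ 3 = 1" "(transpose M ** M) $ 4 $ 4 = 1" "(transpose M ** M) $ 3 $ 4 = 0"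
    using MM by (simp_all add: mat_def)
  then have ort: "p * p + r * r = 1" "q * q + s * s = 1" "p * q + r * s = 0"
    by (simp_all add: matrix_matrix_mult_def transpose_def sum_4 z p_def q_def r_def s_def)
  have "(q - r)^2 + (s + p)^2 = 0" using d ort by (simp add: power2_eq_square algebra_simps)
  then have qr: "q = r" and sp: "s = - p"
    by (smt (verit) sum_power2_eq_zero_iff)+
  have MMsq: "M ** M = mat 1"
    using ort qr sp
    by (simp add: vec_eq_iff forall_4 matrix_matrix_mult_def sum_4 z mat_def
        flip: p_def q_def r_def s_def)
  have AQ: "A = Q ** M ** transpose Q"
    by (simp add: M_def matrix_mul_assoc QQ' flip: matrix_mul_assoc)
       (simp add: matrix_mul_assoc QQ')
  have "A ** A = Q ** (M ** (transpose Q ** Q) ** M) ** transpose Q"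
    by (simp add: AQ matrix_mul_assoc)
  also have "\<dots> = mat 1" by (simp add: QQ MMsq QQ')
  finally show ?thesis .
qed

lemma arc_fixpoint:
  fixes \<gamma> :: "real \<Rightarrow> 'a::real_normed_vector" and f :: "'a \<Rightarrow> 'a"
  assumes arc: "arc \<gamma>" and cf: "continuous_on UNIV f"
    and fim: "f ` path_image \<gamma> = path_image \<gamma>"
    and f0: "f (pathstart \<gamma>) = pathfinish \<gamma>" and f1: "f (pathfinish \<gamma>) = pathstart \<gamma>"
  shows "\<exists>z\<in>path_image \<gamma>. f z = z"
proof -
  obtain k where hk: "homeomorphism {0..1} (path_image \<gamma>) \<gamma> k"
    using homeomorphism_arc[OF arc] by blast
  have kc: "continuous_on (path_image \<gamma>) k" and gc: "continuous_on {0..1} \<gamma>"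
    and gim: "\<gamma> ` {0..1} = path_image \<gamma>" and kim: "k ` path_image \<gamma> = {0..1}"
    and kg: "\<And>t. t \<in> {0..1} \<Longrightarrow> k (\<gamma> t) = t" and gk: "\<And>y. y \<in> path_image \<gamma> \<Longrightarrow> \<gamma> (k y) = y"
    using hk by (auto simp: homeomorphism_def)
  define F where "F t = k (f (\<gamma> t)) - t" for t
  have cF: "continuous_on {0..1} F"
    unfolding F_def
  proof (intro continuous_intros)
    show "continuous_on {0..1} (\<lambda>t. k (f (\<gamma> t)))"
      by (rule continuous_on_compose2[OF kc continuous_on_compose2[OF cf gc]]) (use gim fim in auto)
  qed
  have "F 0 = 1" using f0 kg[of 1] by (simp add: F_def pathstart_def pathfinish_def)
  moreover have "F 1 = -1" using f1 kg[of 0] by (simp add: F_def pathstart_def pathfinish_def)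
  ultimately have "\<exists>x. 0 \<le> x \<and> x \<le> 1 \<and> F x = 0"
    by (intro IVT2'[OF _ _ _ cF]) auto
  then obtain t where t: "0 \<le> t" "t \<le> 1" "F t = 0" by blast
  have gt: "\<gamma> t \<in> path_image \<gamma>" using t by (simp add: path_image_def)
  have fgt: "f (\<gamma> t) \<in> path_image \<gamma>" using gt fim by (metis imageI)
  have "k (f (\<gamma> t)) = t" using t(3) by (simp add: F_def)
  then have "f (\<gamma> t) = \<gamma> t"
    using gk[OF fgt] by simp
  then show ?thesis using gt by blast
qed
lemma VW_disj: "partV n \<inter> partW n = {}" by (auto simp: partV_def partW_def)

lemma aut_side:
  assumes f: "f \<in> Aut_Knn n" and n: "0 < n"
  shows "(f ` partV n = partV n \<and> f ` partW n = partW n) \<or> (f ` partV n = partW n \<and> f ` partW n = partV n)"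
proof -
  let ?V = "partV n" and ?W = "partW n"
  have perm: "f permutes Knn_verts n" and adj: "\<And>x y. x \<in> Knn_verts n \<Longrightarrow> y \<in> Knn_verts n \<Longrightarrow> Knn_adj n x y \<longleftrightarrow> Knn_adj n (f x) (f y)"
    using f by (auto simp: Aut_Knn_def)
  have img: "f ` Knn_verts n = Knn_verts n" using perm by (rule permutes_image)
  have fin: "\<And>x. x \<in> Knn_verts n \<Longrightarrow> f x \<in> Knn_verts n" using img by blast
  have inj: "inj f" using perm by (rule permutes_inj)
  have v0: "Inl 0 \<in> ?V" using n by (simp add: partV_def)
  have KV: "Knn_verts n = ?V \<union> ?W" by (simp add: Knn_verts_def)
  have d: "?V \<inter> ?W = {}" by (rule VW_disj)
  have sameV: "\<And>x y. x \<in> ?V \<Longrightarrow> y \<in> ?V \<Longrightarrow> (f x \<in> ?V \<longleftrightarrow> f y \<in> ?V)"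
  proof -
    fix x y assume x: "x \<in> ?V" and y: "y \<in> ?V"
    have "\<not> Knn_adj n x y" using x y d by (auto simp: Knn_adj_def)
    then have "\<not> Knn_adj n (f x) (f y)" using adj[of x y] x y KV by auto
    moreover have "f x \<in> ?V \<union> ?W" "f y \<in> ?V \<union> ?W" using fin x y KV by auto
    ultimately show "f x \<in> ?V \<longleftrightarrow> f y \<in> ?V" by (auto simp: Knn_adj_def)
  qed
  have diffVW: "\<And>x y. x \<in> ?V \<Longrightarrow> y \<in> ?W \<Longrightarrow> (f x \<in> ?V \<longleftrightarrow> f y \<in> ?W)"
  proof -
    fix x y assume x: "x \<in> ?V" and y: "y \<in> ?W"
    have "Knn_adj n x y" using x y by (auto simp: Knn_adj_def)
    then have "Knn_adj n (f x) (f y)" using adj[of x y] x y KV by auto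
    moreover have "f x \<in> ?V \<union> ?W" "f y \<in> ?V \<union> ?W" using fin x y KV by auto
    ultimately show "f x \<in> ?V \<longleftrightarrow> f y \<in> ?W" using d by (auto simp: Knn_adj_def)
  qed
  show ?thesis
  proof (cases "f (Inl 0) \<in> ?V")
    case True
    have s1: "f ` ?V \<subseteq> ?V" using sameV[OF v0] True by auto
    have s2: "f ` ?W \<subseteq> ?W" using diffVW[OF v0] True by auto
    have "f ` ?V \<union> f ` ?W = ?V \<union> ?W" using img KV by (simp add: image_Un)
    then have "f ` ?V = ?V \<and> f ` ?W = ?W" using s1 s2 d by blast
    then show ?thesis by blast
  next
    case False
    have fv0: "f (Inl 0) \<in> ?W" using False fin[of "Inl 0"] v0 KV by auto
    have s1: "f ` ?V \<subseteq> ?W"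
    proof
      fix z assume "z \<in> f ` ?V" then obtain x where x: "x \<in> ?V" "z = f x" by blast
      then have "f x \<notin> ?V" using sameV[OF v0 x(1)] False by simp
      then show "z \<in> ?W" using fin[of x] x KV by auto
    qed
    have s2: "f ` ?W \<subseteq> ?V"
    proof
      fix z assume "z \<in> f ` ?W" then obtain x where x: "x \<in> ?W" "z = f x" by blast
      then have "f x \<notin> ?W" using diffVW[OF v0 x(1)] False by simp
      then show "z \<in> ?V" using fin[of x] x KV by auto
    qed
    have "f ` ?V \<union> f ` ?W = ?V \<union> ?W" using img KV by (simp add: image_Un)
    then have "f ` ?V = ?W \<and> f ` ?W = ?V" using s1 s2 d by blast
    then show ?thesis by blast
  qed
qed

lemma aut_pres_mult:
  assumes f: "f \<in> Aut_Knn n" and g: "g \<in> Aut_Knn n" and n: "0 < n"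
  shows "((f \<circ> g) ` partV n = partV n) \<longleftrightarrow> ((f ` partV n = partV n) \<longleftrightarrow> (g ` partV n = partV n))"
proof -
  have ne: "partV n \<noteq> partW n" using n by (auto simp: partV_def partW_def)
  have e: "(f \<circ> g) ` partV n = f ` (g ` partV n)" by (simp add: image_comp)
  show ?thesis using aut_side[OF f n] aut_side[OF g n] ne unfolding e
    by (elim disjE conjE) (simp_all add: ne ne[symmetric])
qed

lemma hom_img_facts:
  fixes \<psi> :: "'b \<Rightarrow> (vtx \<Rightarrow> vtx)"
  assumes grp: "group K" and iso: "\<psi> \<in> iso K (perm_group X)" and injX: "\<And>f. f \<in> X \<Longrightarrow> inj f"
  shows "\<psi> \<one>\<^bsub>K\<^esub> = id"
    and "\<And>a b. a \<in> X \<Longrightarrow> b \<in> X \<Longrightarrow> a \<circ> b \<in> X"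
    and "\<And>a. a \<in> X \<Longrightarrow> \<exists>b\<in>X. a \<circ> b = id"
    and "\<psi> ` carrier K = X"
    and "\<And>x y. x \<in> carrier K \<Longrightarrow> y \<in> carrier K \<Longrightarrow> \<psi> (x \<otimes>\<^bsub>K\<^esub> y) = \<psi> x \<circ> \<psi> y"
proof -
  interpret K: group K by (rule grp)
  have hom: "\<psi> \<in> hom K (perm_group X)" and bij: "bij_betw \<psi> (carrier K) X"
    using iso by (auto simp: iso_def perm_group_def)
  show surj: "\<psi> ` carrier K = X" using bij by (simp add: bij_betw_def)
  show mult: "\<And>x y. x \<in> carrier K \<Longrightarrow> y \<in> carrier K \<Longrightarrow> \<psi> (x \<otimes>\<^bsub>K\<^esub> y) = \<psi> x \<circ> \<psi> y"
    using hom_mult[OF hom] by (simp add: perm_group_def)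
  have inX: "\<And>x. x \<in> carrier K \<Longrightarrow> \<psi> x \<in> X" using surj by blast
  have ee: "\<psi> \<one>\<^bsub>K\<^esub> \<circ> \<psi> \<one>\<^bsub>K\<^esub> = \<psi> \<one>\<^bsub>K\<^esub>"
    using mult[of "\<one>\<^bsub>K\<^esub>" "\<one>\<^bsub>K\<^esub>"] by simp
  have ie: "inj (\<psi> \<one>\<^bsub>K\<^esub>)" using injX inX by simp
  show one: "\<psi> \<one>\<^bsub>K\<^esub> = id"
  proof
    fix z
    have "\<psi> \<one>\<^bsub>K\<^esub> (\<psi> \<one>\<^bsub>K\<^esub> z) = \<psi> \<one>\<^bsub>K\<^esub> z" using ee by (metis comp_apply)
    then show "\<psi> \<one>\<^bsub>K\<^esub> z = id z" using ie by (simp add: inj_eq)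
  qed
  show "\<And>a b. a \<in> X \<Longrightarrow> b \<in> X \<Longrightarrow> a \<circ> b \<in> X"
  proof -
    fix a b assume "a \<in> X" "b \<in> X"
    then obtain \<alpha> \<beta> where "\<alpha> \<in> carrier K" "\<beta> \<in> carrier K" "a = \<psi> \<alpha>" "b = \<psi> \<beta>"
      using surj by blast
    then show "a \<circ> b \<in> X" using mult inX by (metis K.m_closed)
  qed
  show "\<And>a. a \<in> X \<Longrightarrow> \<exists>b\<in>X. a \<circ> b = id"
  proof -
    fix a assume "a \<in> X"
    then obtain \<alpha> where a: "\<alpha> \<in> carrier K" "a = \<psi> \<alpha>" using surj by blast
    have "a \<circ> \<psi> (inv\<^bsub>K\<^esub> \<alpha>) = id" using a mult[of \<alpha> "inv\<^bsub>K\<^esub> \<alpha>"] one by simp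
    then show "\<exists>b\<in>X. a \<circ> b = id" using a inX by blast
  qed
qed

lemma sq_in_sub:
  fixes G H :: "('a \<Rightarrow> 'a) set"
  assumes finG: "finite G" and card: "card G = 2 * card H" and HG: "H \<subseteq> G"
    and Gc: "\<And>a b. a \<in> G \<Longrightarrow> b \<in> G \<Longrightarrow> a \<circ> b \<in> G"
    and Hc: "\<And>a b. a \<in> H \<Longrightarrow> b \<in> H \<Longrightarrow> a \<circ> b \<in> H"
    and Hi: "\<And>a. a \<in> H \<Longrightarrow> \<exists>b\<in>H. a \<circ> b = id"
    and injG: "\<And>f. f \<in> G \<Longrightarrow> inj f"
    and x: "x \<in> G"
  shows "x \<circ> x \<in> H"
proof (rule ccontr)
  assume nx: "x \<circ> x \<notin> H"
  have xH: "x \<notin> H" using nx Hc by blast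
  have ix: "inj x" using injG x by blast
  have inj: "inj_on (\<lambda>h. x \<circ> h) H"
  proof (rule inj_onI)
    fix a b assume "x \<circ> a = x \<circ> b"
    then show "a = b" using ix by (simp add: fun_eq_iff inj_eq)
  qed
  have finH: "finite H" using finG HG finite_subset by blast
  have cxH: "card ((\<lambda>h. x \<circ> h) ` H) = card H" using inj by (rule card_image)
  have disj: "(\<lambda>h. x \<circ> h) ` H \<inter> H = {}"
  proof (rule ccontr)
    assume "(\<lambda>h. x \<circ> h) ` H \<inter> H \<noteq> {}"
    then obtain h where h: "h \<in> H" "x \<circ> h \<in> H" by blast
    obtain h' where h': "h' \<in> H" "h \<circ> h' = id" using Hi h(1) by blast
    have "x = (x \<circ> h) \<circ> h'" using h'(2) by (simp add: comp_assoc)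
    then have "x \<in> H" using Hc h(2) h'(1) by metis
    then show False using xH by blast
  qed
  have sub: "(\<lambda>h. x \<circ> h) ` H \<union> H \<subseteq> G" using Gc x HG by blast
  have "card ((\<lambda>h. x \<circ> h) ` H \<union> H) = card G"
    using card_Un_disjoint[of "(\<lambda>h. x \<circ> h) ` H" H] finH disj cxH card by simp
  then have eq: "(\<lambda>h. x \<circ> h) ` H \<union> H = G" using card_subset_eq[OF finG sub] by simp
  have "x \<circ> x \<in> G" using Gc x by blast
  then obtain h where h: "h \<in> H" "x \<circ> x = x \<circ> h" using eq nx by blast
  then have "x = h" using ix by (simp add: fun_eq_iff inj_eq)
  then show False using xH h by blast
qed

lemma c3_id:
  fixes a b c :: nat
  assumes "a \<noteq> b" "b \<noteq> c" "a \<noteq> c"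
  shows "(Transposition.transpose a b \<circ> Transposition.transpose b c) \<circ> (Transposition.transpose a b \<circ> Transposition.transpose b c) \<circ> (Transposition.transpose a b \<circ> Transposition.transpose b c) = id"
proof
  fix x
  show "((Transposition.transpose a b \<circ> Transposition.transpose b c) \<circ> (Transposition.transpose a b \<circ> Transposition.transpose b c) \<circ> (Transposition.transpose a b \<circ> Transposition.transpose b c)) x = id x"
    using assms by (cases "x = a"; cases "x = b"; cases "x = c") (simp_all add: Transposition.transpose_def)
qed
definition cyc4 :: "nat \<Rightarrow> nat" where "cyc4 = Transposition.transpose 1 2 \<circ> Transposition.transpose 2 3 \<circ> Transposition.transpose 3 4"
lemma cyc4_4: "(cyc4 \<circ> cyc4) \<circ> (cyc4 \<circ> cyc4) = id"
proof
  fix x :: nat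
  show "((cyc4 \<circ> cyc4) \<circ> (cyc4 \<circ> cyc4)) x = id x"
    by (cases "x = 1"; cases "x = 2"; cases "x = 3"; cases "x = 4") (simp_all add: cyc4_def Transposition.transpose_def)
qed
lemma cyc4_sq: "cyc4 \<circ> cyc4 \<noteq> id"
proof -
  have "(cyc4 \<circ> cyc4) 1 = 3" by (simp add: cyc4_def Transposition.transpose_def)
  then show ?thesis by (intro notI) simp
qed

theorem lemma6:
  fixes n :: nat and G H :: "(vtx \<Rightarrow> vtx) set"
    and emb :: "vtx \<Rightarrow> real^4" and gam :: "vtx \<Rightarrow> vtx \<Rightarrow> real \<Rightarrow> real^4"
    and Ghat :: "(real^4^4) set"
  assumes GAut: "G \<subseteq> Aut_Knn n"
    and GS4: "sym_group 4 \<cong> perm_group G"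
    and HG: "H \<subseteq> G"
    and HA4: "alt_group 4 \<cong> perm_group H"
    and emb: "Knn_embedding n emb gam"
    and ind: "induced_by n emb gam G Ghat"
    and invol: "\<And>h. h \<in> H \<Longrightarrow> h \<noteq> id \<Longrightarrow> h \<circ> h = id \<Longrightarrow>
                 card {v \<in> partV n. h v = v} = 2 \<and> card {w \<in> partW n. h w = w} = 2"
  shows "\<forall>g\<in>G. g ` partV n = partV n \<and> g ` partW n = partW n"
proof (cases "n = 0")
  case True
  then show ?thesis by (simp add: partV_def partW_def)
next
  case False
  then have n: "0 < n" by simp
  let ?V = "partV n" and ?W = "partW n"
  have VW: "?V \<noteq> ?W" using n by (auto simp: partV_def partW_def)
  have Gaut: "\<And>f. f \<in> G \<Longrightarrow> f \<in> Aut_Knn n" using GAut by blast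
  have perG: "\<And>f. f \<in> G \<Longrightarrow> f permutes Knn_verts n" using Gaut by (auto simp: Aut_Knn_def)
  have injG: "\<And>f. f \<in> G \<Longrightarrow> inj f" using perG permutes_inj by blast
  have injH: "\<And>f. f \<in> H \<Longrightarrow> inj f" using HG injG by blast
  obtain \<phi> where \<phi>: "\<phi> \<in> iso (sym_group 4) (perm_group G)" using GS4 by (auto simp: is_iso_def)
  obtain \<psi> where \<psi>: "\<psi> \<in> iso (alt_group 4) (perm_group H)" using HA4 by (auto simp: is_iso_def)
  note Gf = hom_img_facts[OF sym_group_is_group \<phi> injG]
  note Hf = hom_img_facts[OF alt_group_is_group \<psi> injH]
  have cardG: "card G = 24"
    using iso_same_card[OF GS4] sym_group_card_carrier[of 4] by (simp add: perm_group_def fact_numeral)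
  have "2 * card (carrier (alt_group 4)) = fact 4" by (rule alt_group_card_carrier) simp
  then have cardH: "card H = 12"
    using iso_same_card[OF HA4] by (simp add: perm_group_def fact_numeral)
  have finG: "finite G" using cardG by (intro card_ge_0_finite) simp
  have sq: "\<And>x. x \<in> G \<Longrightarrow> x \<circ> x \<in> H"
    by (rule sq_in_sub[OF finG _ HG Gf(2) Hf(2) Hf(3) injG]) (simp_all add: cardG cardH)
  have \<phi>one: "\<phi> id = id" using Gf(1) by (simp add: sym_group_one)
  have \<phi>mult: "\<And>\<sigma> \<tau>. \<sigma> permutes {1..4} \<Longrightarrow> \<tau> permutes {1..4} \<Longrightarrow> \<phi> (\<sigma> \<circ> \<tau>) = \<phi> \<sigma> \<circ> \<phi> \<tau>"
    using Gf(5) by (simp add: sym_group_carrier sym_group_mult)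
  have \<phi>G: "\<And>\<sigma>. \<sigma> permutes {1..4} \<Longrightarrow> \<phi> \<sigma> \<in> G" using Gf(4) sym_group_carrier by blast
  have \<phi>surj: "\<And>g. g \<in> G \<Longrightarrow> \<exists>\<sigma>. \<sigma> permutes {1..4} \<and> g = \<phi> \<sigma>"
    using Gf(4) by (force simp: sym_group_carrier)
  have \<phi>inj: "inj_on \<phi> {\<sigma>. \<sigma> permutes {1..4}}"
    using \<phi> by (auto simp: iso_def bij_betw_def sym_group_def)
  have allV: "\<forall>g\<in>G. g ` ?V = ?V"
  proof (rule ccontr)
    assume neg: "\<not> (\<forall>g\<in>G. g ` ?V = ?V)"
    define P where "P \<sigma> \<longleftrightarrow> \<phi> \<sigma> ` ?V = ?V" for \<sigma>
    have Pmult: "\<And>\<sigma> \<tau>. \<sigma> permutes {1..4} \<Longrightarrow> \<tau> permutes {1..4} \<Longrightarrow> P (\<sigma> \<circ> \<tau>) \<longleftrightarrow> (P \<sigma> \<longleftrightarrow> P \<tau>)"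
      unfolding P_def using aut_pres_mult[OF Gaut[OF \<phi>G] Gaut[OF \<phi>G] n] \<phi>mult by simp
    have Psq: "\<And>\<sigma>. \<sigma> permutes {1..4} \<Longrightarrow> P (\<sigma> \<circ> \<sigma>)" using Pmult by blast
    have tr: "\<And>a b. a \<in> {1..4} \<Longrightarrow> b \<in> {1..4} \<Longrightarrow> Transposition.transpose a b permutes {1..4}"
      by (rule permutes_swap_id)
    have Ptr: "P (Transposition.transpose a b) \<longleftrightarrow> P (Transposition.transpose b c)"
      if abc: "a \<in> {1..4}" "b \<in> {1..4}" "c \<in> {1..4}" "a \<noteq> b" "b \<noteq> c" "a \<noteq> c" for a b c :: nat
    proof -
      define t where "t = Transposition.transpose a b \<circ> Transposition.transpose b c"
      have tp: "t permutes {1..4}" unfolding t_def using tr abc by (blast intro: permutes_compose)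
      have t3: "t \<circ> t \<circ> t = id" unfolding t_def using c3_id[OF abc(4-6)] by simp
      have "(t \<circ> t) \<circ> (t \<circ> t) = (t \<circ> t \<circ> t) \<circ> t" by (simp add: comp_assoc)
      then have "(t \<circ> t) \<circ> (t \<circ> t) = t" using t3 by simp
      then have "P t" using Psq[of "t \<circ> t"] tp permutes_compose by metis
      then show ?thesis using Pmult[OF tr tr] abc unfolding t_def by blast
    qed
    have Ptr': "P (Transposition.transpose x y) \<longleftrightarrow> P (Transposition.transpose x z)"
      if "x \<in> {1..4}" "y \<in> {1..4}" "z \<in> {1..4}" "x \<noteq> y" "y \<noteq> z" "x \<noteq> z" for x y z :: nat
      using Ptr[of y x z] that by (simp add: transpose_commute)
    have Pall: "P (Transposition.transpose a b) \<longleftrightarrow> P (Transposition.transpose 1 2)"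
      if ab: "a \<in> {1..4}" "b \<in> {1..4}" "a \<noteq> b" for a b :: nat
    proof -
      have i: "(1::nat) \<in> {1..4}" "(2::nat) \<in> {1..4}" by auto
      consider "a = 1" | "a = 2" | "a \<noteq> 1" "a \<noteq> 2" by blast
      then show ?thesis
      proof cases
        case 1
        then show ?thesis using Ptr'[of 1 b 2] ab i by (cases "b = 2") auto
      next
        case 2
        then show ?thesis using Ptr'[of 2 b 1] ab i by (cases "b = 1") (auto simp: transpose_commute)
      next
        case 3
        consider "b = 1" | "b = 2" | "b \<noteq> 1" "b \<noteq> 2" by blast
        then show ?thesis
        proof cases
          case 1
          then show ?thesis using Ptr'[of 1 a 2] ab i \<open>a \<noteq> 1\<close> \<open>a \<noteq> 2\<close> by (auto simp: transpose_commute)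
        next
          case 2
          then show ?thesis using Ptr'[of 2 a 1] ab i \<open>a \<noteq> 1\<close> \<open>a \<noteq> 2\<close> by (auto simp: transpose_commute)
        next
          case 3
          then show ?thesis using Ptr'[of a b 1] Ptr'[of 1 a 2] ab i \<open>a \<noteq> 1\<close> \<open>a \<noteq> 2\<close>
            by (auto simp: transpose_commute)
        qed
      qed
    qed
    have notP12: "\<not> P (Transposition.transpose 1 2)"
    proof
      assume P12: "P (Transposition.transpose 1 2)"
      have allP: "P \<sigma>" if "\<sigma> permutes {1..4}" for \<sigma>
        using that finite_atLeastAtMost[of "1::nat" 4]
      proof (induction rule: permutes_induct)
        case id
        have "\<phi> id ` ?V = ?V" using \<phi>one by simp
        then show ?case by (simp add: P_def id_def)
      next
        case (swap a b p)
        then show ?case using Pmult[OF tr[OF swap(1,2)], of p] Pall[OF swap(1-3)] P12 swap by blast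
      qed
      have "\<forall>g\<in>G. g ` ?V = ?V"
      proof
        fix g assume "g \<in> G"
        then obtain \<sigma> where "\<sigma> permutes {1..4}" "g = \<phi> \<sigma>" using \<phi>surj by blast
        then show "g ` ?V = ?V" using allP P_def by blast
      qed
      then show False using neg by blast
    qed
    have i4: "(1::nat) \<in> {1..4}" "(2::nat) \<in> {1..4}" "(3::nat) \<in> {1..4}" "(4::nat) \<in> {1..4}" by auto
    have cperm: "cyc4 permutes {1..4}" unfolding cyc4_def
      by (intro permutes_compose tr i4)
    have "P cyc4 \<longleftrightarrow> ((P (Transposition.transpose 1 2) \<longleftrightarrow> P (Transposition.transpose 2 3)) \<longleftrightarrow> P (Transposition.transpose 3 4))"
      unfolding cyc4_def
      using Pmult[OF permutes_compose[OF tr[OF i4(2,3)] tr[OF i4(1,2)]] tr[OF i4(3,4)]]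
        Pmult[OF tr[OF i4(1,2)] tr[OF i4(2,3)]] by simp
    moreover have "P (Transposition.transpose 2 3) \<longleftrightarrow> P (Transposition.transpose 1 2)"
      by (rule Pall) auto
    moreover have "P (Transposition.transpose 3 4) \<longleftrightarrow> P (Transposition.transpose 1 2)"
      by (rule Pall) auto
    ultimately have Pc: "\<not> P cyc4" using notP12 by blast
    define g where "g = \<phi> cyc4"
    define h where "h = g \<circ> g"
    have gG: "g \<in> G" unfolding g_def using \<phi>G cperm by blast
    have c2perm: "cyc4 \<circ> cyc4 permutes {1..4}" using cperm permutes_compose by blast
    have h\<phi>: "h = \<phi> (cyc4 \<circ> cyc4)" unfolding h_def g_def using \<phi>mult cperm by simp
    have hH: "h \<in> H" unfolding h_def using sq gG by blast
    have hG: "h \<in> G" using hH HG by blast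
    have hid: "h \<noteq> id"
    proof
      assume "h = id"
      then have "\<phi> (cyc4 \<circ> cyc4) = \<phi> id" using h\<phi> \<phi>one by simp
      then have "cyc4 \<circ> cyc4 = id"
        using \<phi>inj c2perm permutes_id by (auto dest: inj_onD)
      then show False using cyc4_sq by blast
    qed
    have hh: "h \<circ> h = id"
      using h\<phi> \<phi>mult[OF c2perm c2perm] cyc4_4 \<phi>one by simp
    have "card {v \<in> ?V. h v = v} = 2" using invol[OF hH hid hh] by blast
    then obtain v1 where v1: "v1 \<in> ?V" "h v1 = v1"
      by (metis (mono_tags, lifting) card.empty empty_Collect_eq zero_neq_numeral)
    have gsw: "g ` ?V = ?W \<and> g ` ?W = ?V"
      using aut_side[OF Gaut[OF gG] n] Pc unfolding P_def g_def by blast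
    define w1 where "w1 = g v1"
    have w1: "w1 \<in> ?W" using gsw v1 unfolding w1_def by blast
    have gw1: "g w1 = v1" using v1 unfolding w1_def h_def by simp
    have vv: "v1 \<in> Knn_verts n" "w1 \<in> Knn_verts n" using v1 w1 by (auto simp: Knn_verts_def)
    have w1V: "w1 \<notin> ?V" using w1 VW_disj by blast
    have v1w1: "v1 \<noteq> w1" using w1V v1 by blast
    have Gs: "Ghat \<subseteq> SO4" using ind by (simp add: induced_by_def)
    have "\<exists>phi. phi \<in> iso (matrix_group Ghat) (perm_group G) \<and>
        (\<forall>A\<in>Ghat. (\<forall>v\<in>Knn_verts n. A *v emb v = emb (phi A v)) \<and>
           (\<forall>v\<in>partV n. \<forall>w\<in>partW n.
              (\<lambda>x. A *v x) ` path_image (gam v w) = edge_image n gam (phi A v) (phi A w)))"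
      using ind unfolding induced_by_def by (elim conjE)
    then obtain phi where phiact: "phi \<in> iso (matrix_group Ghat) (perm_group G) \<and>
        (\<forall>A\<in>Ghat. (\<forall>v\<in>Knn_verts n. A *v emb v = emb (phi A v)) \<and>
           (\<forall>v\<in>partV n. \<forall>w\<in>partW n.
              (\<lambda>x. A *v x) ` path_image (gam v w) = edge_image n gam (phi A v) (phi A w)))" ..
    have phi: "phi \<in> iso (matrix_group Ghat) (perm_group G)" using phiact by (rule conjunct1)
    have act: "(\<forall>v\<in>Knn_verts n. A *v emb v = emb (phi A v)) \<and>
           (\<forall>v\<in>partV n. \<forall>w\<in>partW n.
              (\<lambda>x. A *v x) ` path_image (gam v w) = edge_image n gam (phi A v) (phi A w))"
      if "A \<in> Ghat" for A
      using phiact that by (elim conjE) (erule bspec)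
    have "phi ` Ghat = G" using phi by (auto simp: iso_def bij_betw_def matrix_group_def perm_group_def)
    then obtain A where A: "A \<in> Ghat" "phi A = g" using gG by blast
    have actv: "\<And>v. v \<in> Knn_verts n \<Longrightarrow> A *v emb v = emb (g v)" using act[OF A(1)] A(2) by blast
    have acte: "(\<lambda>x. A *v x) ` path_image (gam v1 w1) = edge_image n gam w1 v1"
      using act[OF A(1)] A(2) v1 w1 gw1 unfolding w1_def by auto
    then have acte': "(\<lambda>x. A *v x) ` path_image (gam v1 w1) = path_image (gam v1 w1)"
      using w1V by (simp add: edge_image_def)
    have embp: "arc (gam v1 w1)" "pathstart (gam v1 w1) = emb v1" "pathfinish (gam v1 w1) = emb w1"
      "path_image (gam v1 w1) \<subseteq> S3"
      using emb v1(1) w1 unfolding Knn_embedding_def by blast+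
    have injemb: "inj_on emb (Knn_verts n)" using emb unfolding Knn_embedding_def by blast
    have Av1: "A *v emb v1 = emb w1" using actv[OF vv(1)] unfolding w1_def by simp
    have Aw1: "A *v emb w1 = emb v1" using actv[OF vv(2)] gw1 by simp
    obtain z where z: "z \<in> path_image (gam v1 w1)" "A *v z = z"
      using arc_fixpoint[OF embp(1), of "\<lambda>x. A *v x"] acte' embp(2,3) Av1 Aw1
      by (auto intro: matrix_vector_mult_linear_continuous_on)
    have z0: "z \<noteq> 0" using z(1) embp(4) by (auto simp: S3_def)
    define u where "u = emb v1 - emb w1"
    have u0: "u \<noteq> 0" using injemb vv v1w1 unfolding u_def by (auto dest: inj_onD)
    have Au: "A *v u = - u" unfolding u_def using Av1 Aw1 by (simp add: matrix_vector_mult_diff_distrib)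
    have ASO: "orthogonal_matrix A" "det A = 1" using Gs A(1) by (auto simp: SO4_def)
    have AA: "A ** A = mat 1" by (rule so4_sq[OF ASO z(2) Au z0 u0])
    have "h = id"
    proof
      fix x
      show "h x = id x"
      proof (cases "x \<in> Knn_verts n")
        case True
        have gx: "g x \<in> Knn_verts n" using perG[OF gG] True by (simp add: permutes_in_image)
        have hx: "h x \<in> Knn_verts n" using perG[OF hG] True by (simp add: permutes_in_image)
        have "emb (h x) = A *v (A *v emb x)" using actv[OF True] actv[OF gx] by (simp add: h_def)
        also have "\<dots> = emb x" by (simp add: matrix_vector_mul_assoc AA)
        finally show ?thesis using injemb True hx by (auto dest: inj_onD)
      next
        case False
        then show ?thesis using perG[OF hG] by (simp add: permutes_not_in)
      qed
    qed
    then show False using hid by blast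
  qed
  show ?thesis
  proof
    fix g assume gG: "g \<in> G"
    have "g ` ?V = ?V" using allV gG by blast
    then show "g ` ?V = ?V \<and> g ` ?W = ?W" using aut_side[OF Gaut[OF gG] n] VW by auto
  qed
qed

end
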